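(* Let $G\subset\mathrm{Homeo}_+(\mathbb{S}^2)$ be a sharply $3$-transitive group containing the rotation group $\mathrm{Rot}(\mathbb{S}^2)$. Then every $g\in G_2$ permutes parallels: equivalently, viewing $g$ as a homeomorphism of $\mathbb{C}$ fixing $0$ (via stereographic projection), $g$ maps every circle centered at the origin onto a circle centered at the origin.
   Context: $\mathrm{Homeo}_+(\mathbb{S}^2)$ is the group of orientation-preserving homeomorphisms of the unit sphere; $\mathrm{Rot}(\mathbb{S}^2)=SO(3)$ acting on $\mathbb{S}^2$. $\mathbb{S}^2$ is identified with $\mathbb{C}\cup\{\infty\}$ by stereographic projection from the North Pole $\mathbf{\infty}$; $\mathbf{0}$ is the South Pole. $G_2=\{g\in G: g(\mathbf{0})=\mathbf{0},\ g(\mathbf{\infty})=\mathbf{\infty}\}$. Parallels are the circles on $\mathbb{S}^2$ of constant latitude with respect to the axis through $\mathbf{0}$ and $\mathbf{\infty}$ (images of circles in $\mathbb{C}$ centered at $0$). $G$ is sharply $3$-transitive if any triple of distinct points can be mapped onto any other triple of distinct points by an element of $G$, and the only element of $G$ fixing each point of a triple of distinct points is the identity. *)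

theory Defs
  imports "HOL-Homology.Homology" "HOL-Algebra.Bij"
begin

text \<open>The unit sphere S^2, realised as the topological space nsphere 2 (points are
  functions nat => real, supported on coordinates 0,1,2, of Euclidean norm 1).\<close>
abbreviation S2 :: "(nat \<Rightarrow> real) set" where
  "S2 \<equiv> topspace (nsphere 2)"

text \<open>Orientation-preserving homeomorphisms of S^2 (Brouwer degree 1), as elements of
  the group of bijections of S2 (HOL-Algebra BijGroup, extensional maps).\<close>
definition Homeo_plus_S2 :: "((nat \<Rightarrow> real) \<Rightarrow> (nat \<Rightarrow> real)) set" where
  "Homeo_plus_S2 = {g \<in> Bij S2. homeomorphic_map (nsphere 2) (nsphere 2) g
                                 \<and> Brouwer_degree2 2 g = 1}"

definition det3 :: "(nat \<Rightarrow> nat \<Rightarrow> real) \<Rightarrow> real" where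
  "det3 A = A 0 0 * (A 1 1 * A 2 2 - A 1 2 * A 2 1)
          - A 0 1 * (A 1 0 * A 2 2 - A 1 2 * A 2 0)
          + A 0 2 * (A 1 0 * A 2 1 - A 1 1 * A 2 0)"

definition SO3 :: "(nat \<Rightarrow> nat \<Rightarrow> real) set" where
  "SO3 = {A. (\<forall>i<3. \<forall>j<3. (\<Sum>k<3. A i k * A j k) = (if i = j then 1 else 0)) \<and> det3 A = 1}"

definition mat_act :: "(nat \<Rightarrow> nat \<Rightarrow> real) \<Rightarrow> (nat \<Rightarrow> real) \<Rightarrow> (nat \<Rightarrow> real)" where
  "mat_act A x = (\<lambda>i. if i < 3 then (\<Sum>j<3. A i j * x j) else 0)"

definition Rot_S2 :: "((nat \<Rightarrow> real) \<Rightarrow> (nat \<Rightarrow> real)) set" where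
  "Rot_S2 = {restrict (mat_act A) S2 | A. A \<in> SO3}"

definition sharply_3_transitive :: "((nat \<Rightarrow> real) \<Rightarrow> (nat \<Rightarrow> real)) set \<Rightarrow> bool" where
  "sharply_3_transitive G \<longleftrightarrow>
     (\<forall>a\<in>S2. \<forall>b\<in>S2. \<forall>c\<in>S2. \<forall>a'\<in>S2. \<forall>b'\<in>S2. \<forall>c'\<in>S2.
        a \<noteq> b \<and> a \<noteq> c \<and> b \<noteq> c \<and> a' \<noteq> b' \<and> a' \<noteq> c' \<and> b' \<noteq> c' \<longrightarrow>
        (\<exists>g\<in>G. g a = a' \<and> g b = b' \<and> g c = c')) \<and>
     (\<forall>g\<in>G. \<forall>a\<in>S2. \<forall>b\<in>S2. \<forall>c\<in>S2.
        a \<noteq> b \<and> a \<noteq> c \<and> b \<noteq> c \<and> g a = a \<and> g b = b \<and> g c = c \<longrightarrow>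
        (\<forall>x\<in>S2. g x = x))"

text \<open>North pole (= infinity under stereographic projection from it) and South pole (= 0).\<close>
definition north_pole :: "nat \<Rightarrow> real" where
  "north_pole = (\<lambda>i. if i = 2 then 1 else 0)"

definition south_pole :: "nat \<Rightarrow> real" where
  "south_pole = (\<lambda>i. if i = 2 then -1 else 0)"

definition G2 :: "((nat \<Rightarrow> real) \<Rightarrow> (nat \<Rightarrow> real)) set \<Rightarrow> ((nat \<Rightarrow> real) \<Rightarrow> (nat \<Rightarrow> real)) set" where
  "G2 G = {g \<in> G. g south_pole = south_pole \<and> g north_pole = north_pole}"

definition parallel :: "real \<Rightarrow> (nat \<Rightarrow> real) set" where
  "parallel c = {x \<in> S2. x 2 = c}"

definition parallels :: "(nat \<Rightarrow> real) set set" where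
  "parallels = {parallel c | c. -1 < c \<and> c < 1}"

end

theory Submission
  imports Defs
begin


lemma topS2: "S2 = {x. (\<Sum>i\<le>2. x i ^ 2) = 1 \<and> (\<forall>i>2. x i = 0)}"
  by (simp add: nsphere)
lemma sum3: fixes f :: "nat \<Rightarrow> real" shows "(\<Sum>i\<le>2. f i) = f 0 + f 1 + f 2"
proof -
  have "{..2::nat} = {0,1,2}" by auto
  then show ?thesis unfolding \<open>{..2::nat} = {0,1,2}\<close> by simp
qed
lemma sum3': fixes f :: "nat \<Rightarrow> real" shows "(\<Sum>i<3. f i) = f 0 + f 1 + f 2"
proof -
  have e: "{..<3::nat} = {0,1,2}" by auto
  show ?thesis unfolding e by simp
qed

lemma inS2: "x \<in> S2 \<longleftrightarrow> x 0 ^ 2 + x 1 ^ 2 + x 2 ^ 2 = 1 \<and> (\<forall>i>2. x i = 0)"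
  by (simp add: topS2 sum3)

definition sw :: "nat \<Rightarrow> nat \<Rightarrow> nat" where
  "sw k i = (if i = 0 then k else if i = k then 0 else i)"

definition swp :: "nat \<Rightarrow> (nat \<Rightarrow> real) \<Rightarrow> (nat \<Rightarrow> real)" where
  "swp k x = (\<lambda>i. x (sw k i))"

definition rfl :: "nat \<Rightarrow> (nat \<Rightarrow> real) \<Rightarrow> (nat \<Rightarrow> real)" where
  "rfl k x = (\<lambda>i. if i = k then -x i else x i)"

lemma cont_swp:
  assumes "k = 1 \<or> k = 2"
  shows "continuous_map (nsphere 2) (nsphere 2) (swp k)"
proof -
  have "continuous_map (nsphere 2) euclideanreal (\<lambda>x. x j)" for j
    by (rule continuous_map_nsphere_projection)
  then have c: "continuous_map (nsphere 2) (powertop_real UNIV) (swp k)"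
    by (simp add: continuous_map_componentwise_UNIV swp_def)
  have "swp k x \<in> S2" if "x \<in> S2" for x
    using that assms by (auto simp: inS2 swp_def sw_def)
  then show ?thesis
    using c by (subst (2) nsphere) (auto simp: continuous_map_in_subtopology topS2)
qed

lemma swp_swp: "k \<noteq> 0 \<Longrightarrow> swp k \<circ> swp k = id"
  by (auto simp: swp_def sw_def fun_eq_iff)

lemma rfl_conj: "k \<noteq> 0 \<Longrightarrow> rfl k = swp k \<circ> rfl 0 \<circ> swp k"
  by (auto simp: swp_def sw_def rfl_def fun_eq_iff)

lemma deg_rfl0: "Brouwer_degree2 2 (rfl 0) = -1"
  using Brouwer_degree2_reflection[of 2] unfolding rfl_def by simp

lemma cont_rfl: "continuous_map (nsphere 2) (nsphere 2) (rfl k)"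
  unfolding rfl_def by (rule continuous_map_nsphere_reflection)

lemma deg_rfl:
  assumes "k = 1 \<or> k = 2"
  shows "Brouwer_degree2 2 (rfl k) = -1"
proof -
  have k: "k \<noteq> 0" using assms by auto
  have cs: "continuous_map (nsphere 2) (nsphere 2) (swp k)" by (rule cont_swp[OF assms])
  have "Brouwer_degree2 2 (swp k) * Brouwer_degree2 2 (swp k) = 1"
    using Brouwer_degree2_compose[OF cs cs] swp_swp[OF k] by simp
  moreover have "Brouwer_degree2 2 (rfl k) = Brouwer_degree2 2 (swp k) * (Brouwer_degree2 2 (rfl 0) * Brouwer_degree2 2 (swp k))"
    unfolding rfl_conj[OF k]
    using Brouwer_degree2_compose[OF cs continuous_map_compose[OF cont_rfl cs]]
      Brouwer_degree2_compose[OF cont_rfl cs, of 0]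
    by (simp add: o_assoc)
  ultimately show ?thesis by (simp add: deg_rfl0 algebra_simps)
qed

lemma deg_neg: "Brouwer_degree2 2 (\<lambda>x i. - x i) = -1"
proof -
  have "Brouwer_degree2 2 (\<lambda>x i. - x i) = Brouwer_degree2 2 (rfl 2 \<circ> rfl 1 \<circ> rfl 0)"
    by (rule Brouwer_degree2_eq) (auto simp: rfl_def fun_eq_iff inS2)
  also have "\<dots> = Brouwer_degree2 2 (rfl 2) * Brouwer_degree2 2 (rfl 1) * Brouwer_degree2 2 (rfl 0)"
    using Brouwer_degree2_compose[OF cont_rfl[of 0] continuous_map_compose[OF cont_rfl[of 1] cont_rfl[of 2]]]
      Brouwer_degree2_compose[OF cont_rfl[of 1] cont_rfl[of 2]]
    by simp
  also have "\<dots> = -1" using deg_rfl0 deg_rfl[of 1] deg_rfl[of 2] by simp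
  finally show ?thesis .
qed

lemma fixed_point:
  assumes f: "continuous_map (nsphere 2) (nsphere 2) f"
    and d: "Brouwer_degree2 2 f = 1"
  shows "\<exists>x\<in>S2. f x = x"
proof (rule ccontr)
  assume nf: "\<not> (\<exists>x\<in>S2. f x = x)"
  define u :: "real \<times> (nat \<Rightarrow> real) \<Rightarrow> nat \<Rightarrow> real"
    where "u = (\<lambda>z i. (1 - fst z) * f (snd z) i - fst z * snd z i)"
  define H :: "real \<times> (nat \<Rightarrow> real) \<Rightarrow> nat \<Rightarrow> real"
    where "H = (\<lambda>z i. u z i / sqrt ((u z 0)\<^sup>2 + (u z 1)\<^sup>2 + (u z 2)\<^sup>2))"
  let ?T = "prod_topology (top_of_set {0..1::real}) (nsphere 2)"
  have fS: "f x \<in> S2" if "x \<in> S2" for x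
    using continuous_map_image_subset_topspace[OF f] that by blast
  have pos: "(u z 0)\<^sup>2 + (u z 1)\<^sup>2 + (u z 2)\<^sup>2 > 0" if "z \<in> topspace ?T" for z
  proof (rule ccontr)
    obtain t x where z: "z = (t,x)" by (cases z)
    have t: "0 \<le> t" "t \<le> 1" and x: "x \<in> S2" using that z by auto
    have fx: "f x \<in> S2" using fS x .
    assume "\<not> ?thesis"
    then have sq: "(u z 0)\<^sup>2 + (u z 1)\<^sup>2 + (u z 2)\<^sup>2 = 0"
      using zero_le_power2[of "u z 0"] zero_le_power2[of "u z 1"] zero_le_power2[of "u z 2"] by linarith
    have "(u z 0)\<^sup>2 = 0" "(u z 1)\<^sup>2 = 0" "(u z 2)\<^sup>2 = 0"
      using sq zero_le_power2[of "u z 0"] zero_le_power2[of "u z 1"] zero_le_power2[of "u z 2"] by linarith+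
    then have u0: "u z 0 = 0" "u z 1 = 0" "u z 2 = 0" by simp_all
    have e: "(1 - t) * f x i = t * x i" if "i \<le> 2" for i
    proof -
      have "i = 0 \<or> i = 1 \<or> i = 2" using that by auto
      then show ?thesis using u0 by (auto simp: u_def z)
    qed
    have e0: "(1 - t) * f x 0 = t * x 0" and e1: "(1 - t) * f x 1 = t * x 1"
      and e2: "(1 - t) * f x 2 = t * x 2" using e by auto
    have "(1 - t)^2 * (f x 0 ^ 2 + f x 1 ^ 2 + f x 2 ^ 2)
        = ((1 - t) * f x 0)^2 + ((1 - t) * f x 1)^2 + ((1 - t) * f x 2)^2"
      by (simp only: power_mult_distrib distrib_left)
    also have "\<dots> = (t * x 0)^2 + (t * x 1)^2 + (t * x 2)^2"
      by (simp only: e0 e1 e2)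
    also have "\<dots> = t^2 * (x 0 ^ 2 + x 1 ^ 2 + x 2 ^ 2)"
      by (simp only: power_mult_distrib distrib_left)
    finally have "(1 - t)^2 * (f x 0 ^ 2 + f x 1 ^ 2 + f x 2 ^ 2) = t^2 * (x 0 ^ 2 + x 1 ^ 2 + x 2 ^ 2)" .
    then have sq: "(1 - t)^2 = t^2" using fx x unfolding inS2 by simp
    have "(1 - t)^2 - t^2 = 1 - 2 * t" by (simp add: power2_eq_square algebra_simps)
    then have th: "t = 1/2" using sq by linarith
    have "f x i = x i" for i
    proof (cases "i \<le> 2")
      case True
      then show ?thesis using e[of i] th by simp
    next
      case False
      then show ?thesis using fx x unfolding inS2 by simp
    qed
    then show False using nf x by auto
  qed
  have cu: "continuous_map ?T euclideanreal (\<lambda>z. u z i)" for i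
  proof -
    have c1: "continuous_map ?T euclideanreal fst"
    proof -
      have "continuous_map (top_of_set {0..1::real}) euclideanreal id"
        by (rule continuous_map_from_subtopology[OF continuous_map_id])
      from continuous_map_compose[OF continuous_map_fst this] show ?thesis by simp
    qed
    have c2: "continuous_map ?T euclideanreal (\<lambda>z. snd z i)"
      using continuous_map_compose[OF continuous_map_snd continuous_map_nsphere_projection]
      by (simp add: o_def)
    have c3: "continuous_map ?T euclideanreal (\<lambda>z. f (snd z) i)"
      using continuous_map_compose[OF continuous_map_compose[OF continuous_map_snd f] continuous_map_nsphere_projection]
      by (simp add: o_def)
    have c0: "continuous_map ?T euclideanreal (\<lambda>z. 1::real)"
      by (rule continuous_map_canonical_const)
    show ?thesis unfolding u_def
      by (rule continuous_map_diff[OF continuous_map_real_mult[OF continuous_map_diff[OF c0 c1] c3] continuous_map_real_mult[OF c1 c2]])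
  qed
  have cH: "continuous_map ?T (nsphere 2) H"
  proof -
    have cs: "continuous_map ?T euclideanreal (\<lambda>z. sqrt ((u z 0)\<^sup>2 + (u z 1)\<^sup>2 + (u z 2)\<^sup>2))"
      by (rule continuous_map_sqrt[OF continuous_map_add[OF continuous_map_add[OF
            continuous_map_real_pow[OF cu] continuous_map_real_pow[OF cu]] continuous_map_real_pow[OF cu]]])
    have "continuous_map ?T euclideanreal (\<lambda>z. H z i)" for i
      unfolding H_def
      by (rule continuous_map_real_divide[OF cu cs]) (use pos in force)
    then have "continuous_map ?T (powertop_real UNIV) H"
      unfolding continuous_map_componentwise_UNIV by blast
    moreover have "H z \<in> S2" if "z \<in> topspace ?T" for z
    proof -
      obtain t x where z: "z = (t,x)" by (cases z)
      have x: "x \<in> S2" using that z by auto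
      have fx: "f x \<in> S2" using fS x .
      define s where "s = (u z 0)\<^sup>2 + (u z 1)\<^sup>2 + (u z 2)\<^sup>2"
      have s: "s > 0" using pos[OF that] by (simp add: s_def)
      have q: "(a / sqrt s)^2 = a^2 / s" for a using s by (simp add: power_divide)
      have "(u z 0 / sqrt s)^2 + (u z 1 / sqrt s)^2 + (u z 2 / sqrt s)^2
          = ((u z 0)\<^sup>2 + (u z 1)\<^sup>2 + (u z 2)\<^sup>2) / s"
        unfolding q by (simp add: add_divide_distrib)
      also have "\<dots> = 1" unfolding s_def[symmetric] using s by simp
      finally have "(H z 0)^2 + (H z 1)^2 + (H z 2)^2 = 1"
        unfolding H_def s_def[symmetric] .
      moreover have "H z i = 0" if "i > 2" for i
        using that x fx by (simp add: H_def u_def z inS2)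
      ultimately show ?thesis by (simp add: inS2)
    qed
    ultimately show ?thesis
      by (subst (2) nsphere) (auto simp: continuous_map_in_subtopology topS2)
  qed
  have h0: "H (0,x) = f x" if "x \<in> S2" for x
    using fS[OF that] by (simp add: H_def u_def fun_eq_iff inS2)
  have h1: "H (1,x) = (\<lambda>i. - x i)" if "x \<in> S2" for x
    using that by (simp add: H_def u_def fun_eq_iff inS2)
  have "homotopic_with (\<lambda>x. True) (nsphere 2) (nsphere 2) f (\<lambda>x i. - x i)"
    by (subst homotopic_with) (use cH h0 h1 in auto)
  then have "Brouwer_degree2 2 f = Brouwer_degree2 2 (\<lambda>x i. - x i)"
    by (rule Brouwer_degree2_homotopic)
  then show False using d deg_neg by simp
qed



lemma carrB: "carrier (BijGroup S) = Bij S"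
  by (simp add: BijGroup_def)

lemma multB: "f \<in> Bij S \<Longrightarrow> g \<in> Bij S \<Longrightarrow> f \<otimes>\<^bsub>BijGroup S\<^esub> g = compose S f g"
  by (simp add: BijGroup_def)

lemma oneB: "\<one>\<^bsub>BijGroup S\<^esub> = (\<lambda>x\<in>S. x)"
  by (simp add: BijGroup_def)

lemma Bij_ext: "f \<in> Bij S \<Longrightarrow> g \<in> Bij S \<Longrightarrow> (\<And>x. x \<in> S \<Longrightarrow> f x = g x) \<Longrightarrow> f = g"
  by (metis Bij_imp_extensional extensionalityI)

lemma Bij_in: "f \<in> Bij S \<Longrightarrow> x \<in> S \<Longrightarrow> f x \<in> S"
  using Bij_imp_funcset by blast

lemma Bij_inj: "f \<in> Bij S \<Longrightarrow> inj_on f S"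
  by (simp add: Bij_def bij_betw_def)

lemma SN: "south_pole \<in> S2" "north_pole \<in> S2" "south_pole \<noteq> north_pole"
  by (auto simp: inS2 south_pole_def north_pole_def fun_eq_iff)

definition E0 :: "nat \<Rightarrow> real" where "E0 = (\<lambda>i. if i = 0 then 1 else 0)"

lemma E0: "E0 \<in> S2" "E0 \<noteq> south_pole" "E0 \<noteq> north_pole"
  by (auto simp: inS2 E0_def south_pole_def north_pole_def fun_eq_iff)

lemma involution:
  assumes sg: "subgroup G (BijGroup S2)" and hp: "G \<subseteq> Homeo_plus_S2"
    and st: "sharply_3_transitive G"
    and h: "h \<in> G" and hs: "h south_pole = north_pole" and hn: "h north_pole = south_pole"
  shows "h \<otimes>\<^bsub>BijGroup S2\<^esub> h = \<one>\<^bsub>BijGroup S2\<^esub>"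
proof -
  have hB: "h \<in> Bij S2" using subgroup.subset[OF sg] h carrB by blast
  have "h \<in> Homeo_plus_S2" using hp h by blast
  then have "continuous_map (nsphere 2) (nsphere 2) h" "Brouwer_degree2 2 h = 1"
    by (auto simp: Homeo_plus_S2_def homeomorphic_imp_continuous_map)
  then obtain x where x: "x \<in> S2" "h x = x" using fixed_point by blast
  have xs: "x \<noteq> south_pole" "x \<noteq> north_pole" using x hs hn SN by auto
  have hh: "h \<otimes>\<^bsub>BijGroup S2\<^esub> h \<in> G" using subgroup.m_closed[OF sg h h] .
  have hhB: "h \<otimes>\<^bsub>BijGroup S2\<^esub> h \<in> Bij S2" using subgroup.subset[OF sg] hh carrB by blast
  have ev: "(h \<otimes>\<^bsub>BijGroup S2\<^esub> h) y = h (h y)" if "y \<in> S2" for y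
    using that by (simp add: multB[OF hB hB] compose_def)
  have sh: "\<forall>g\<in>G. \<forall>a\<in>S2. \<forall>b\<in>S2. \<forall>c\<in>S2.
        a \<noteq> b \<and> a \<noteq> c \<and> b \<noteq> c \<and> g a = a \<and> g b = b \<and> g c = c \<longrightarrow> (\<forall>x\<in>S2. g x = x)"
    using st unfolding sharply_3_transitive_def by blast
  have "\<forall>y\<in>S2. (h \<otimes>\<^bsub>BijGroup S2\<^esub> h) y = y"
  proof
    fix y assume y: "y \<in> S2"
    show "(h \<otimes>\<^bsub>BijGroup S2\<^esub> h) y = y"
      apply (rule sh[rule_format, OF hh SN(1) SN(2) x(1) _ y])
      using ev SN x xs hs hn by auto
  qed
  then show ?thesis
    by (intro Bij_ext[OF hhB]) (auto simp: oneB id_Bij)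
qed

lemma G2_commute:
  assumes sg: "subgroup G (BijGroup S2)" and hp: "G \<subseteq> Homeo_plus_S2"
    and st: "sharply_3_transitive G"
    and g1: "g1 \<in> G2 G" and g2: "g2 \<in> G2 G"
  shows "g1 \<otimes>\<^bsub>BijGroup S2\<^esub> g2 = g2 \<otimes>\<^bsub>BijGroup S2\<^esub> g1"
proof -
  interpret B: group "BijGroup S2" by (rule group_BijGroup)
  have GB: "G \<subseteq> carrier (BijGroup S2)" using subgroup.subset[OF sg] .
  obtain \<sigma> where \<sigma>: "\<sigma> \<in> G" "\<sigma> south_pole = north_pole" "\<sigma> north_pole = south_pole"
    using st SN E0 unfolding sharply_3_transitive_def
    by (metis (no_types, lifting))
  have \<sigma>B: "\<sigma> \<in> carrier (BijGroup S2)" using GB \<sigma> by blast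
  have key: "g \<otimes>\<^bsub>BijGroup S2\<^esub> \<sigma> = \<sigma> \<otimes>\<^bsub>BijGroup S2\<^esub> inv\<^bsub>BijGroup S2\<^esub> g" if g: "g \<in> G2 G" for g
  proof -
    have gG: "g \<in> G" and gs: "g south_pole = south_pole" and gn: "g north_pole = north_pole"
      using g by (auto simp: G2_def)
    have gB: "g \<in> carrier (BijGroup S2)" using GB gG by blast
    have "g \<otimes>\<^bsub>BijGroup S2\<^esub> \<sigma> \<in> G" using subgroup.m_closed[OF sg gG \<sigma>(1)] .
    moreover have "(g \<otimes>\<^bsub>BijGroup S2\<^esub> \<sigma>) south_pole = north_pole"
      "(g \<otimes>\<^bsub>BijGroup S2\<^esub> \<sigma>) north_pole = south_pole"
      using gB \<sigma>B \<sigma> gs gn SN by (auto simp: carrB multB compose_def)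
    ultimately have inv1: "(g \<otimes>\<^bsub>BijGroup S2\<^esub> \<sigma>) \<otimes>\<^bsub>BijGroup S2\<^esub> (g \<otimes>\<^bsub>BijGroup S2\<^esub> \<sigma>) = \<one>\<^bsub>BijGroup S2\<^esub>"
      using involution[OF sg hp st] by blast
    have inv2: "\<sigma> \<otimes>\<^bsub>BijGroup S2\<^esub> \<sigma> = \<one>\<^bsub>BijGroup S2\<^esub>"
      using involution[OF sg hp st \<sigma>] .
    have "inv\<^bsub>BijGroup S2\<^esub> (g \<otimes>\<^bsub>BijGroup S2\<^esub> \<sigma>) = g \<otimes>\<^bsub>BijGroup S2\<^esub> \<sigma>"
      using B.inv_equality[OF inv1] gB \<sigma>B by blast
    moreover have "inv\<^bsub>BijGroup S2\<^esub> \<sigma> = \<sigma>"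
      using B.inv_equality[OF inv2] \<sigma>B by blast
    ultimately show ?thesis
      using B.inv_mult_group[OF gB \<sigma>B] by simp
  qed
  have g1B: "g1 \<in> carrier (BijGroup S2)" and g2B: "g2 \<in> carrier (BijGroup S2)"
    using g1 g2 GB by (auto simp: G2_def)
  have "g1 \<otimes>\<^bsub>BijGroup S2\<^esub> g2 \<in> G"
    using subgroup.m_closed[OF sg] g1 g2 by (auto simp: G2_def)
  moreover have "(g1 \<otimes>\<^bsub>BijGroup S2\<^esub> g2) south_pole = south_pole"
    "(g1 \<otimes>\<^bsub>BijGroup S2\<^esub> g2) north_pole = north_pole"
    using g1 g2 g1B g2B by (auto simp: G2_def carrB multB compose_def SN)
  ultimately have g12: "g1 \<otimes>\<^bsub>BijGroup S2\<^esub> g2 \<in> G2 G"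
    by (simp add: G2_def)
  have "\<sigma> \<otimes>\<^bsub>BijGroup S2\<^esub> (inv\<^bsub>BijGroup S2\<^esub> g2 \<otimes>\<^bsub>BijGroup S2\<^esub> inv\<^bsub>BijGroup S2\<^esub> g1)
      = \<sigma> \<otimes>\<^bsub>BijGroup S2\<^esub> inv\<^bsub>BijGroup S2\<^esub> (g1 \<otimes>\<^bsub>BijGroup S2\<^esub> g2)"
    using B.inv_mult_group[OF g1B g2B] by simp
  also have "\<dots> = (g1 \<otimes>\<^bsub>BijGroup S2\<^esub> g2) \<otimes>\<^bsub>BijGroup S2\<^esub> \<sigma>"
    using key[OF g12] by simp
  also have "\<dots> = g1 \<otimes>\<^bsub>BijGroup S2\<^esub> (g2 \<otimes>\<^bsub>BijGroup S2\<^esub> \<sigma>)"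
    using B.m_assoc g1B g2B \<sigma>B by simp
  also have "\<dots> = (g1 \<otimes>\<^bsub>BijGroup S2\<^esub> \<sigma>) \<otimes>\<^bsub>BijGroup S2\<^esub> inv\<^bsub>BijGroup S2\<^esub> g2"
    using key[OF g2] B.m_assoc g1B g2B \<sigma>B by simp
  also have "\<dots> = \<sigma> \<otimes>\<^bsub>BijGroup S2\<^esub> (inv\<^bsub>BijGroup S2\<^esub> g1 \<otimes>\<^bsub>BijGroup S2\<^esub> inv\<^bsub>BijGroup S2\<^esub> g2)"
    using key[OF g1] B.m_assoc g1B g2B \<sigma>B by simp
  finally have "inv\<^bsub>BijGroup S2\<^esub> g2 \<otimes>\<^bsub>BijGroup S2\<^esub> inv\<^bsub>BijGroup S2\<^esub> g1
      = inv\<^bsub>BijGroup S2\<^esub> g1 \<otimes>\<^bsub>BijGroup S2\<^esub> inv\<^bsub>BijGroup S2\<^esub> g2"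
    using \<sigma>B g1B g2B by (metis B.Units_eq B.Units_l_cancel B.inv_closed B.m_closed)
  then have "inv\<^bsub>BijGroup S2\<^esub> (g1 \<otimes>\<^bsub>BijGroup S2\<^esub> g2) = inv\<^bsub>BijGroup S2\<^esub> (g2 \<otimes>\<^bsub>BijGroup S2\<^esub> g1)"
    using B.inv_mult_group g1B g2B by simp
  then show ?thesis
    using B.inv_inj g1B g2B by (meson B.m_closed inj_onD)
qed

definition Mz :: "real \<Rightarrow> real \<Rightarrow> nat \<Rightarrow> nat \<Rightarrow> real" where
  "Mz a b = (\<lambda>i j. if i = 0 \<and> j = 0 then a else if i = 0 \<and> j = 1 then -b
      else if i = 1 \<and> j = 0 then b else if i = 1 \<and> j = 1 then a
      else if i = 2 \<and> j = 2 then 1 else 0)"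

definition rz :: "real \<Rightarrow> real \<Rightarrow> (nat \<Rightarrow> real) \<Rightarrow> (nat \<Rightarrow> real)" where
  "rz a b = restrict (mat_act (Mz a b)) S2"

lemma all3: "(\<forall>i<(3::nat). P i) \<longleftrightarrow> P 0 \<and> P 1 \<and> P 2"
proof -
  have "{..<3::nat} = {0,1,2}" by auto
  then show ?thesis by (metis insert_iff lessThan_iff singletonD)
qed

lemma mat_act_Mz: "mat_act (Mz a b) x = (\<lambda>i. if i = 0 then a * x 0 - b * x 1
   else if i = 1 then b * x 0 + a * x 1 else if i = 2 then x 2 else 0)"
proof
  fix i
  show "mat_act (Mz a b) x i = (if i = 0 then a * x 0 - b * x 1
   else if i = 1 then b * x 0 + a * x 1 else if i = 2 then x 2 else 0)"
  proof (cases "i < 3")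
    case True
    then have "i = 0 \<or> i = 1 \<or> i = 2" by auto
    then show ?thesis by (auto simp: mat_act_def sum3' Mz_def)
  next
    case False
    then show ?thesis by (auto simp: mat_act_def)
  qed
qed

lemma Mz_SO3: assumes "a^2 + b^2 = 1" shows "Mz a b \<in> SO3"
  using assms unfolding SO3_def all3
  by (simp add: sum3' Mz_def det3_def power2_eq_square)

lemma rz_Rot: "a^2 + b^2 = 1 \<Longrightarrow> rz a b \<in> Rot_S2"
  unfolding Rot_S2_def rz_def using Mz_SO3 by blast

lemma rz_val: "x \<in> S2 \<Longrightarrow> rz a b x = (\<lambda>i. if i = 0 then a * x 0 - b * x 1
   else if i = 1 then b * x 0 + a * x 1 else if i = 2 then x 2 else 0)"
  by (simp add: rz_def mat_act_Mz)

lemma rz_2: "x \<in> S2 \<Longrightarrow> rz a b x 2 = x 2"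
  by (simp add: rz_val)

lemma rz_S2: assumes "a^2 + b^2 = 1" "x \<in> S2" shows "rz a b x \<in> S2"
proof -
  have "(a * x 0 - b * x 1)^2 + (b * x 0 + a * x 1)^2 = (a^2 + b^2) * (x 0 ^ 2 + x 1 ^ 2)"
    by (simp add: power2_eq_square algebra_simps)
  then show ?thesis using assms by (simp add: rz_val inS2)
qed

lemma rz_poles: "rz a b south_pole = south_pole" "rz a b north_pole = north_pole"
  using SN by (auto simp: rz_val south_pole_def north_pole_def fun_eq_iff)

lemma rz_exists:
  assumes x: "x \<in> S2" and y: "y \<in> S2" and h: "x 2 = y 2" and n: "(x 2)^2 \<noteq> 1"
  shows "\<exists>a b. a^2 + b^2 = 1 \<and> rz a b x = y"
proof -
  define r where "r = x 0 ^ 2 + x 1 ^ 2"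
  have rx: "r = 1 - (x 2)^2" using x by (simp add: inS2 r_def)
  have ry: "y 0 ^ 2 + y 1 ^ 2 = r" using y h rx by (simp add: inS2)
  have r0: "r \<noteq> 0" using rx n by simp
  define a where "a = (x 0 * y 0 + x 1 * y 1) / r"
  define b where "b = (x 0 * y 1 - x 1 * y 0) / r"
  have "(x 0 * y 0 + x 1 * y 1)^2 + (x 0 * y 1 - x 1 * y 0)^2 = (x 0 ^ 2 + x 1 ^ 2) * (y 0 ^ 2 + y 1 ^ 2)"
    by (simp add: power2_eq_square algebra_simps)
  then have "(x 0 * y 0 + x 1 * y 1)^2 + (x 0 * y 1 - x 1 * y 0)^2 = r * r"
    using ry r_def by simp
  then have ab: "a^2 + b^2 = 1"
    using r0 by (simp add: a_def b_def power_divide add_divide_distrib[symmetric] power2_eq_square)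
  have ar: "a * r = x 0 * y 0 + x 1 * y 1" using r0 by (simp add: a_def)
  have br: "b * r = x 0 * y 1 - x 1 * y 0" using r0 by (simp add: b_def)
  have "(a * x 0 - b * x 1) * r = x 0 * (a * r) - x 1 * (b * r)" by (simp add: algebra_simps)
  also have "\<dots> = y 0 * r" unfolding ar br by (simp add: r_def power2_eq_square algebra_simps)
  finally have e0: "a * x 0 - b * x 1 = y 0" using r0 by simp
  have "(b * x 0 + a * x 1) * r = x 0 * (b * r) + x 1 * (a * r)" by (simp add: algebra_simps)
  also have "\<dots> = y 1 * r" unfolding ar br by (simp add: r_def power2_eq_square algebra_simps)
  finally have e1: "b * x 0 + a * x 1 = y 1" using r0 by simp
  have "rz a b x = y"
  proof
    fix i
    show "rz a b x i = y i"
      using e0 e1 h y by (auto simp: rz_val[OF x] inS2)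
  qed
  then show ?thesis using ab by blast
qed

lemma axis_pt: assumes "x \<in> S2" "x 0 = 0" "x 1 = 0" "x 2 = v"
  shows "x = (\<lambda>i. if i = 2 then v else 0)"
proof
  fix i :: nat
  have "i = 0 \<or> i = 1 \<or> i = 2 \<or> i > 2" by arith
  then show "x i = (if i = 2 then v else 0)" using assms by (auto simp: inS2)
qed

lemma axis_pt2: assumes "x \<in> S2" "(x 2)^2 = 1" shows "x 0 = 0" "x 1 = 0"
proof -
  have "(x 0)^2 + (x 1)^2 = 0" using assms by (simp add: inS2)
  then show "x 0 = 0" "x 1 = 0"
    using zero_le_power2[of "x 0"] zero_le_power2[of "x 1"] by (simp_all add: add_nonneg_eq_0_iff)
qed

theorem mainTheorem16:
  fixes G :: "((nat \<Rightarrow> real) \<Rightarrow> (nat \<Rightarrow> real)) set"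
  assumes "subgroup G (BijGroup S2)"
    and "G \<subseteq> Homeo_plus_S2"
    and "sharply_3_transitive G"
    and "Rot_S2 \<subseteq> G"
  shows "\<forall>g\<in>G2 G. \<forall>P\<in>parallels. g ` P \<in> parallels"
proof (intro ballI)
  note sg = assms(1) and hp = assms(2) and st = assms(3) and rot = assms(4)
  fix g P assume g: "g \<in> G2 G" and P: "P \<in> parallels"
  obtain c where Pc: "P = parallel c" and c1: "-1 < c" and c2: "c < 1"
    using P by (auto simp: parallels_def)
  have gB: "g \<in> Bij S2" using g subgroup.subset[OF sg] by (auto simp: G2_def carrB)
  have gs: "g south_pole = south_pole" and gn: "g north_pole = north_pole"
    using g by (auto simp: G2_def)
  have rzG2: "rz a b \<in> G2 G" if "a^2 + b^2 = 1" for a b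
    using rz_Rot[OF that] rot rz_poles by (auto simp: G2_def)
  have rzB: "rz a b \<in> Bij S2" if "a^2 + b^2 = 1" for a b
    using rzG2[OF that] subgroup.subset[OF sg] by (auto simp: G2_def carrB)
  have comm: "g (rz a b z) = rz a b (g z)" if ab: "a^2 + b^2 = 1" and z: "z \<in> S2" for a b z
  proof -
    have "g \<otimes>\<^bsub>BijGroup S2\<^esub> rz a b = rz a b \<otimes>\<^bsub>BijGroup S2\<^esub> g"
      using G2_commute[OF sg hp st g rzG2[OF ab]] .
    then have "compose S2 g (rz a b) z = compose S2 (rz a b) g z"
      using multB[OF gB rzB[OF ab]] multB[OF rzB[OF ab] gB] by simp
    then show ?thesis using z by (simp add: compose_def)
  qed
  have cc: "1 - c^2 > 0"
  proof -
    have "(1 - c) * (1 + c) > 0" using c1 c2 by simp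
    then show ?thesis by (simp add: power2_eq_square algebra_simps)
  qed
  define p where "p = (\<lambda>i::nat. if i = 0 then sqrt (1 - c^2) else if i = 2 then c else 0)"
  have pS: "p \<in> S2" using cc by (simp add: p_def inS2)
  have p2: "p 2 = c" by (simp add: p_def)
  have cn: "c^2 \<noteq> 1" using cc by simp
  define c' where "c' = g p 2"
  have gpS: "g p \<in> S2" using Bij_in[OF gB pS] .
  have c'1: "c' \<noteq> 1"
  proof
    assume "c' = 1"
    then have "g p = north_pole"
      using axis_pt[OF gpS axis_pt2[OF gpS], of 1] \<open>c' = 1\<close> by (simp add: c'_def north_pole_def)
    then have "p = north_pole"
      using Bij_inj[OF gB] gn pS SN by (metis inj_onD)
    then show False using p2 c2 by (simp add: north_pole_def)
  qed
  have c'2: "c' \<noteq> -1"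
  proof
    assume "c' = -1"
    then have "g p = south_pole"
      using axis_pt[OF gpS axis_pt2[OF gpS], of "-1"] \<open>c' = -1\<close> by (simp add: c'_def south_pole_def)
    then have "p = south_pole"
      using Bij_inj[OF gB] gs pS SN by (metis inj_onD)
    then show False using p2 c1 by (simp add: south_pole_def)
  qed
  have c'n: "c'^2 \<noteq> 1" using c'1 c'2 by (simp add: power2_eq_1_iff)
  have "c'^2 \<le> 1"
  proof -
    have "(g p 0)^2 + (g p 1)^2 + (g p 2)^2 = 1" using gpS by (simp add: inS2)
    then show ?thesis unfolding c'_def
      using zero_le_power2[of "g p 0"] zero_le_power2[of "g p 1"] by linarith
  qed
  then have "\<bar>c'\<bar> \<le> 1" by (simp only: abs_square_le_1)
  then have c'r: "-1 < c' \<and> c' < 1"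
    using c'1 c'2 by linarith
  have "g ` P = parallel c'"
  proof
    show "g ` P \<subseteq> parallel c'"
    proof
      fix y assume "y \<in> g ` P"
      then obtain x where x: "x \<in> S2" "x 2 = c" and y: "y = g x"
        by (auto simp: Pc parallel_def)
      obtain a b where ab: "a^2 + b^2 = 1" and r: "rz a b p = x"
        using rz_exists[OF pS x(1)] p2 x(2) cn by metis
      have "y = rz a b (g p)" using y r comm[OF ab pS] by simp
      then show "y \<in> parallel c'"
        using rz_S2[OF ab gpS] rz_2[OF gpS] by (simp add: parallel_def c'_def)
    qed
  next
    show "parallel c' \<subseteq> g ` P"
    proof
      fix y assume "y \<in> parallel c'"
      then have y: "y \<in> S2" "y 2 = c'" by (auto simp: parallel_def)
      obtain a b where ab: "a^2 + b^2 = 1" and r: "rz a b (g p) = y"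
        using rz_exists[OF gpS y(1)] y(2) c'n unfolding c'_def by metis
      have "y = g (rz a b p)" using r comm[OF ab pS] by simp
      moreover have "rz a b p \<in> P"
        using rz_S2[OF ab pS] rz_2[OF pS] p2 by (simp add: Pc parallel_def)
      ultimately show "y \<in> g ` P" by blast
    qed
  qed
  then show "g ` P \<in> parallels"
    using c'r by (auto simp: parallels_def)
qed

end
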